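(* Let $\alpha: I\to M$ be a unit-speed curve on an oriented surface $M\subset E^3$ with Darboux frame $\{T,V,U\}$ and geodesic torsion $\tau_g$. Let $\phi$ be an antiderivative of $\tau_g$ on $I$ and let $$\gamma(s)=\alpha(s)+\sin(\phi(s))\,V(s)+\cos(\phi(s))\,U(s),$$ and assume $\gamma$ is regular, i.e. $\gamma'(s)\neq 0$ for all $s$. Then $\gamma$ is a general helix if and only if $\alpha$ is a helical curve on $M$.
   Context: $M$ is an oriented surface in Euclidean 3-space $E^3$ and $\alpha:I\to M$ is a unit-speed curve with arc-length parameter $s$. Its Darboux frame $\{T,V,U\}$ consists of the unit tangent $T=\alpha'$, the unit surface normal $U$ of $M$ along $\alpha$, and $V=U\times T$; it satisfies $T'=k_gV+k_nU$, $V'=-k_gT+\tau_gU$, $U'=-k_nT-\tau_gV$, where $k_g,k_n,\tau_g$ are the geodesic curvature, normal curvature and geodesic torsion. A regular curve is a general helix if its unit tangent makes a constant angle with a fixed direction. $\alpha$ is a helical curve on $M$ if $\langle T,d\rangle$ is constant for some fixed unit vector $d$. *)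

theory Defs
  imports "HOL-Analysis.Analysis" "HOL-Analysis.Cross3"
begin

definition darboux_frame ::
  "real set \<Rightarrow> (real \<Rightarrow> real^3) \<Rightarrow> (real \<Rightarrow> real^3) \<Rightarrow> (real \<Rightarrow> real^3) \<Rightarrow> (real \<Rightarrow> real^3)
   \<Rightarrow> (real \<Rightarrow> real) \<Rightarrow> (real \<Rightarrow> real) \<Rightarrow> (real \<Rightarrow> real) \<Rightarrow> bool" where
  "darboux_frame I \<alpha> T V U kg kn tg \<longleftrightarrow>
     continuous_on I kg \<and> continuous_on I kn \<and> continuous_on I tg \<and>
     (\<forall>s\<in>I.
        (\<alpha> has_vector_derivative T s) (at s) \<and>
        norm (T s) = 1 \<and> norm (U s) = 1 \<and> T s \<bullet> U s = 0 \<and>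
        V s = cross3 (U s) (T s) \<and>
        (T has_vector_derivative (kg s *\<^sub>R V s + kn s *\<^sub>R U s)) (at s) \<and>
        (V has_vector_derivative (- kg s *\<^sub>R T s + tg s *\<^sub>R U s)) (at s) \<and>
        (U has_vector_derivative (- kn s *\<^sub>R T s - tg s *\<^sub>R V s)) (at s))"

definition general_helix :: "real set \<Rightarrow> (real \<Rightarrow> real^3) \<Rightarrow> bool" where
  "general_helix I \<gamma> \<longleftrightarrow>
     (\<forall>s\<in>I. \<gamma> differentiable (at s) \<and> vector_derivative \<gamma> (at s) \<noteq> 0) \<and>
     (\<exists>d c. norm d = 1 \<and>
        (\<forall>s\<in>I. (vector_derivative \<gamma> (at s) /\<^sub>R norm (vector_derivative \<gamma> (at s))) \<bullet> d = c))"

definition helical_curve :: "real set \<Rightarrow> (real \<Rightarrow> real^3) \<Rightarrow> bool" where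
  "helical_curve I T \<longleftrightarrow> (\<exists>d c. norm d = 1 \<and> (\<forall>s\<in>I. T s \<bullet> d = c))"

end

theory Submission
  imports Defs
begin

theorem theorem3p3:
  fixes I :: "real set" and \<alpha> T V U \<gamma> :: "real \<Rightarrow> real^3"
    and kg kn tg \<phi> :: "real \<Rightarrow> real"
  assumes "is_interval I" and "open I"
    and "darboux_frame I \<alpha> T V U kg kn tg"
    and "\<forall>s\<in>I. (\<phi> has_real_derivative tg s) (at s)"
    and "\<forall>s. \<gamma> s = \<alpha> s + sin (\<phi> s) *\<^sub>R V s + cos (\<phi> s) *\<^sub>R U s"
    and "\<forall>s\<in>I. \<gamma> differentiable (at s) \<and> vector_derivative \<gamma> (at s) \<noteq> 0"
  shows "general_helix I \<gamma> \<longleftrightarrow> helical_curve I T"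
proof -
  define f where "f s = 1 - kg s * sin (\<phi> s) - kn s * cos (\<phi> s)" for s
  have D: "\<forall>s\<in>I.
        (\<alpha> has_vector_derivative T s) (at s) \<and>
        norm (T s) = 1 \<and> norm (U s) = 1 \<and> T s \<bullet> U s = 0 \<and>
        V s = cross3 (U s) (T s) \<and>
        (T has_vector_derivative (kg s *\<^sub>R V s + kn s *\<^sub>R U s)) (at s) \<and>
        (V has_vector_derivative (- kg s *\<^sub>R T s + tg s *\<^sub>R U s)) (at s) \<and>
        (U has_vector_derivative (- kn s *\<^sub>R T s - tg s *\<^sub>R V s)) (at s)"
    and ckg: "continuous_on I kg" and ckn: "continuous_on I kn"
    using assms(3) unfolding darboux_frame_def by auto
  have geq: "\<gamma> = (\<lambda>s. \<alpha> s + sin (\<phi> s) *\<^sub>R V s + cos (\<phi> s) *\<^sub>R U s)"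
    using assms(5) by auto
  have vd: "vector_derivative \<gamma> (at s) = f s *\<^sub>R T s" if s: "s \<in> I" for s
  proof -
    have a: "(\<alpha> has_vector_derivative T s) (at s)"
      and v: "(V has_vector_derivative (- kg s *\<^sub>R T s + tg s *\<^sub>R U s)) (at s)"
      and u: "(U has_vector_derivative (- kn s *\<^sub>R T s - tg s *\<^sub>R V s)) (at s)"
      using D s by auto
    have p: "(\<phi> has_real_derivative tg s) (at s)" using assms(4) s by auto
    have ps: "((\<lambda>x. sin (\<phi> x)) has_real_derivative cos (\<phi> s) * tg s) (at s)"
      using p by (auto intro!: derivative_eq_intros)
    have pc: "((\<lambda>x. cos (\<phi> x)) has_real_derivative - sin (\<phi> s) * tg s) (at s)"
      using p by (auto intro!: derivative_eq_intros)
    have "(\<gamma> has_vector_derivative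
       (T s + (sin (\<phi> s) *\<^sub>R (- kg s *\<^sub>R T s + tg s *\<^sub>R U s) + (cos (\<phi> s) * tg s) *\<^sub>R V s)
            + (cos (\<phi> s) *\<^sub>R (- kn s *\<^sub>R T s - tg s *\<^sub>R V s) + (- sin (\<phi> s) * tg s) *\<^sub>R U s))) (at s)"
      unfolding geq
      by (intro has_vector_derivative_add has_vector_derivative_scaleR a v u ps pc)
    moreover have "T s + (sin (\<phi> s) *\<^sub>R (- kg s *\<^sub>R T s + tg s *\<^sub>R U s) + (cos (\<phi> s) * tg s) *\<^sub>R V s)
            + (cos (\<phi> s) *\<^sub>R (- kn s *\<^sub>R T s - tg s *\<^sub>R V s) + (- sin (\<phi> s) * tg s) *\<^sub>R U s)
          = f s *\<^sub>R T s"
      unfolding f_def by (simp add: algebra_simps)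
    ultimately show ?thesis by (metis vector_derivative_at)
  qed
  have nT: "norm (T s) = 1" if "s \<in> I" for s using D that by auto
  have fnz: "f s \<noteq> 0" if "s \<in> I" for s using assms(6) vd[OF that] that by auto
  have cphi: "continuous_on I \<phi>"
    using assms(4) by (meson DERIV_isCont continuous_at_imp_continuous_on)
  have cf: "continuous_on I f"
    unfolding f_def[abs_def] using ckg ckn cphi
    by (intro continuous_intros) auto
  have conn: "connected (f ` I)"
    using connected_continuous_image[OF cf] is_interval_connected[OF assms(1)] by blast
  obtain \<sigma> :: real where sg: "\<sigma> = 1 \<or> \<sigma> = -1" "\<forall>s\<in>I. sgn (f s) = \<sigma>"
  proof (cases "\<exists>s\<in>I. f s > 0")
    case True
    then obtain a where a: "a \<in> I" "f a > 0" by auto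
    have "\<forall>s\<in>I. f s > 0"
    proof (rule ccontr)
      assume "\<not> (\<forall>s\<in>I. f s > 0)"
      then obtain b where b: "b \<in> I" "f b < 0" using fnz by force
      have "0 \<in> f ` I"
        using conn a b unfolding connected_iff_interval
        by (metis imageI less_imp_le)
      then show False using fnz by auto
    qed
    then show ?thesis using that[of 1] by auto
  next
    case False
    then show ?thesis using that[of "-1"] fnz by (auto simp: sgn_if)
  qed
  have unit: "vector_derivative \<gamma> (at s) /\<^sub>R norm (vector_derivative \<gamma> (at s)) = \<sigma> *\<^sub>R T s"
    if "s \<in> I" for s
  proof -
    have "vector_derivative \<gamma> (at s) /\<^sub>R norm (vector_derivative \<gamma> (at s)) = sgn (f s) *\<^sub>R T s"
      using vd[OF that] nT[OF that] fnz[OF that] by (simp add: sgn_if)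
    then show ?thesis using sg that by auto
  qed
  have sq: "\<sigma> * \<sigma> = 1" using sg by auto
  show ?thesis
  proof
    assume "general_helix I \<gamma>"
    then obtain d c where d: "norm d = 1"
      "\<forall>s\<in>I. (vector_derivative \<gamma> (at s) /\<^sub>R norm (vector_derivative \<gamma> (at s))) \<bullet> d = c"
      unfolding general_helix_def by blast
    have "\<forall>s\<in>I. T s \<bullet> d = \<sigma> * c"
    proof
      fix s assume s: "s \<in> I"
      have "(\<sigma> *\<^sub>R T s) \<bullet> d = c" using d(2) unit[OF s] s by metis
      then have "\<sigma> * (T s \<bullet> d) = c" by simp
      then have "\<sigma> * \<sigma> * (T s \<bullet> d) = \<sigma> * c" by (metis mult.assoc)
      then show "T s \<bullet> d = \<sigma> * c" using sq by simp
    qed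
    then show "helical_curve I T" unfolding helical_curve_def using d(1) by blast
  next
    assume "helical_curve I T"
    then obtain d c where d: "norm d = 1" "\<forall>s\<in>I. T s \<bullet> d = c"
      unfolding helical_curve_def by blast
    have "\<forall>s\<in>I. (vector_derivative \<gamma> (at s) /\<^sub>R norm (vector_derivative \<gamma> (at s))) \<bullet> d = \<sigma> * c"
      using unit d(2) by simp
    then show "general_helix I \<gamma>" unfolding general_helix_def using assms(6) d(1) by blast
  qed
qed

end
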